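(* Let $\{Y_t\}$ be the unique stationary solution $Y_t=\sum_{i\ge0}a_i\epsilon_{t-i}$ of $Y_t=\sum_{i=1}^d\phi_iY_{t-i}+\epsilon_t$, with $1-\sum_i\phi_iz^i$ having roots outside the closed unit disk and iid innovations having a Lebesgue density and a finite $\delta$-moment for some $\delta>0$, $\epsilon_t$ independent of $\sigma\{Y_s,s\le t-1\}$. Fix $h\ge1$ and suppose $Y_t,\dots,Y_{t-n+1}$ are observed. Let $\widehat\phi=\widehat\phi(n)$ be an estimator with $\widehat\phi\to\phi$ in probability. With $\Phi=(\phi\ e_1\cdots e_{d-1})$, $\widehat\Phi=(\widehat\phi\ e_1\cdots e_{d-1})$, $\phi(h)=\Phi^he_1$, $\widehat\phi(h)=\widehat\Phi^he_1$, $Z_{t-k}=(Y_{t-k},\dots,Y_{t-k-d+1})^\top$, $\widehat Y_{t+h}(\phi)=\phi(h)^\top Z_t$, $\widehat Y_{t+h}(\widehat\phi)=\widehat\phi(h)^\top Z_t$, define \[ \widehat U_{t+h}=\frac{1}{n-d+1}\sum_{k=0}^{n-d}\mathbb{I}\big(\widehat\phi(h)^\top Z_{t-k}\le \widehat Y_{t+h}(\widehat\phi)\big),\qquad U^*_{t+h}=\mathbb{P}_Z\big(\phi(h)^\top Z\le \widehat Y_{t+h}(\phi)\big), \] where $Z$ is distributed as $Z_t$ and independent of $(Z_t,\widehat\phi)$. If $\widehat Y_{t+h}(\phi)$ has a density with respect to Lebesgue measure, then $\widehat U_{t+h}\to U^*_{t+h}$ in probability as $n\to\infty$.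
   Context: $\mathbb{P}_Z$ denotes probability with respect to $Z$ only (i.e. conditional on everything else); $e_1,\dots,e_{d-1}$ are the first standard basis vectors of $\mathbb{R}^d$. *)

theory Defs
  imports "HOL-Probability.Probability" "HOL-Computational_Algebra.Formal_Power_Series"
begin

text \<open>Vectors in R^d are represented as functions nat => real, only indices 0..d-1 matter.
  Index i (0-based) corresponds to the paper's index i+1; so phi i = phi_(i+1).\<close>

text \<open>Phi = (phi e_1 ... e_(d-1)): column 0 is phi, column j (j>=1) is the basis vector
  with 1 at (0-based) position j-1.\<close>
definition companion_mat :: "(nat \<Rightarrow> real) \<Rightarrow> nat \<Rightarrow> nat \<Rightarrow> real" where
  "companion_mat phi i j = (if j = 0 then phi i else if i = j - 1 then 1 else 0)"

definition mat_vec :: "nat \<Rightarrow> (nat \<Rightarrow> nat \<Rightarrow> real) \<Rightarrow> (nat \<Rightarrow> real) \<Rightarrow> nat \<Rightarrow> real" where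
  "mat_vec d A v = (\<lambda>i. \<Sum>j<d. A i j * v j)"

definition unit_vec :: "nat \<Rightarrow> nat \<Rightarrow> real" where
  "unit_vec k = (\<lambda>i. if i = k then 1 else 0)"

definition pred_coef :: "nat \<Rightarrow> (nat \<Rightarrow> real) \<Rightarrow> nat \<Rightarrow> nat \<Rightarrow> real" where
  "pred_coef d phi h = (mat_vec d (companion_mat phi) ^^ h) (unit_vec 0)"

definition lin_pred :: "nat \<Rightarrow> (nat \<Rightarrow> real) \<Rightarrow> (int \<Rightarrow> 'a \<Rightarrow> real) \<Rightarrow> int \<Rightarrow> 'a \<Rightarrow> real" where
  "lin_pred d c Y s \<omega> = (\<Sum>i<d. c i * Y (s - int i) \<omega>)"

text \<open>MA(infinity) coefficients a_i: coefficients of 1 / (1 - sum_(i=1)^d phi_i z^i)\<close>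
definition ma_coef :: "nat \<Rightarrow> (nat \<Rightarrow> real) \<Rightarrow> nat \<Rightarrow> real" where
  "ma_coef d phi = fps_nth (inverse (1 - (\<Sum>i<d. fps_const (phi i) * fps_X ^ Suc i)))"

definition U_hat :: "nat \<Rightarrow> nat \<Rightarrow> (nat \<Rightarrow> 'a \<Rightarrow> nat \<Rightarrow> real) \<Rightarrow> (int \<Rightarrow> 'a \<Rightarrow> real) \<Rightarrow> int \<Rightarrow> nat \<Rightarrow> 'a \<Rightarrow> real" where
  "U_hat d h phihat Y t n \<omega> =
     (1 / real (n - d + 1)) *
     (\<Sum>k\<in>{0..n - d}. if lin_pred d (pred_coef d (phihat n \<omega>) h) Y (t - int k) \<omega>
                          \<le> lin_pred d (pred_coef d (phihat n \<omega>) h) Y t \<omega> then 1 else 0)"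

definition U_star :: "'a measure \<Rightarrow> nat \<Rightarrow> nat \<Rightarrow> (nat \<Rightarrow> real) \<Rightarrow> (int \<Rightarrow> 'a \<Rightarrow> real) \<Rightarrow> int \<Rightarrow> 'a \<Rightarrow> real" where
  "U_star M d h phi Y t \<omega> =
     measure (distr M (PiM {..<d} (\<lambda>_. borel)) (\<lambda>\<omega>'. \<lambda>i\<in>{..<d}. Y (t - int i) \<omega>'))
       {z \<in> space (PiM {..<d} (\<lambda>_. (borel :: real measure))).
          (\<Sum>i<d. pred_coef d phi h i * z i) \<le> lin_pred d (pred_coef d phi h) Y t \<omega>}"

definition conv_prob :: "'a measure \<Rightarrow> (nat \<Rightarrow> 'a \<Rightarrow> real) \<Rightarrow> ('a \<Rightarrow> real) \<Rightarrow> bool" where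
  "conv_prob M X L \<longleftrightarrow>
     (\<forall>e>0. (\<lambda>n. measure M {\<omega> \<in> space M. e < \<bar>X n \<omega> - L \<omega>\<bar>}) \<longlonglongrightarrow> 0)"

definition conv_prob_vec :: "'a measure \<Rightarrow> nat \<Rightarrow> (nat \<Rightarrow> 'a \<Rightarrow> nat \<Rightarrow> real) \<Rightarrow> (nat \<Rightarrow> real) \<Rightarrow> bool" where
  "conv_prob_vec M d X c \<longleftrightarrow>
     (\<forall>e>0. (\<lambda>n. measure M {\<omega> \<in> space M. e < sqrt (\<Sum>i<d. (X n \<omega> i - c i)^2)}) \<longlonglongrightarrow> 0)"

end

theory Submission
  imports Defs
begin

lemma (in prob_space) integrable_bdd:
  fixes f :: "'a \<Rightarrow> real"
  shows "f \<in> borel_measurable M \<Longrightarrow> (\<And>x. x \<in> space M \<Longrightarrow> \<bar>f x\<bar> \<le> B) \<Longrightarrow> integrable M f"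
  by (intro integrable_const_bound[where B=B]) auto

lemma abs_int_bound:
  fixes f :: "'a \<Rightarrow> real"
  assumes "integrable M f" "integrable M g" "\<And>x. x \<in> space M \<Longrightarrow> \<bar>f x\<bar> \<le> g x"
  shows "\<bar>\<integral>x. f x \<partial>M\<bar> \<le> (\<integral>x. g x \<partial>M)"
proof -
  have "norm (\<integral>x. f x \<partial>M) \<le> (\<integral>x. norm (f x) \<partial>M)" by (rule integral_norm_bound)
  also have "\<dots> \<le> (\<integral>x. g x \<partial>M)" using assms by (intro integral_mono) auto
  finally show ?thesis by simp
qed

lemma abs_prod_le1: "\<bar>u\<bar> \<le> 1 \<Longrightarrow> \<bar>v\<bar> \<le> (1::real) \<Longrightarrow> \<bar>u * v\<bar> \<le> 1"
  by (simp add: abs_mult mult_le_one)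

lemma (in prob_space) cov_far:
  fixes Xk Xk' Xmk Xmk' :: "'a \<Rightarrow> real"
  assumes [measurable]: "Xk \<in> borel_measurable M" "Xk' \<in> borel_measurable M"
     "Xmk \<in> borel_measurable M" "Xmk' \<in> borel_measurable M"
  and b: "\<And>x. x \<in> space M \<Longrightarrow> 0 \<le> Xk x \<and> Xk x \<le> 1" "\<And>x. x \<in> space M \<Longrightarrow> 0 \<le> Xk' x \<and> Xk' x \<le> 1"
     "\<And>x. x \<in> space M \<Longrightarrow> 0 \<le> Xmk x \<and> Xmk x \<le> 1" "\<And>x. x \<in> space M \<Longrightarrow> 0 \<le> Xmk' x \<and> Xmk' x \<le> 1"
  and mu: "0 \<le> mu" "mu \<le> 1" and m1: "expectation Xk = mu" and m2: "expectation Xk' = mu"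
  and a1: "expectation (\<lambda>x. \<bar>Xk x - Xmk x\<bar>) \<le> e"
  and a2: "expectation (\<lambda>x. \<bar>Xk' x - Xmk' x\<bar>) \<le> e"
  and ind: "expectation (\<lambda>x. Xmk x * Xmk' x) = expectation Xmk * expectation Xmk'"
  shows "\<bar>expectation (\<lambda>x. (Xk x - mu) * (Xk' x - mu))\<bar> \<le> 3 * e"
proof -
  have i1[simp]: "integrable M Xk" "integrable M Xk'" "integrable M Xmk" "integrable M Xmk'"
    using b by (auto intro!: integrable_bdd[where B=1])
  have i2[simp]: "integrable M (\<lambda>x. Xmk x * Xmk' x)"
    using b by (intro integrable_bdd[where B=1]) (auto simp: abs_mult intro: mult_le_one)
  have i3: "integrable M (\<lambda>x. (Xk x - Xmk x) * (Xk' x - mu) + (Xmk x - mu) * (Xk' x - Xmk' x))"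
  proof (rule integrable_bdd[where B=2])
    fix x assume x: "x \<in> space M"
    have "\<bar>(Xk x - Xmk x) * (Xk' x - mu)\<bar> \<le> 1" "\<bar>(Xmk x - mu) * (Xk' x - Xmk' x)\<bar> \<le> 1"
      using b[OF x] mu by (auto intro!: abs_prod_le1)
    then show "\<bar>(Xk x - Xmk x) * (Xk' x - mu) + (Xmk x - mu) * (Xk' x - Xmk' x)\<bar> \<le> 2" by linarith
  qed simp
  have i4: "integrable M (\<lambda>x. \<bar>Xk x - Xmk x\<bar>)" "integrable M (\<lambda>x. \<bar>Xk' x - Xmk' x\<bar>)"
    using b by (auto intro!: integrable_bdd[where B=1])
  have pw: "(Xk x - mu) * (Xk' x - mu) = (Xmk x * Xmk' x - mu * Xmk' x - mu * Xmk x + mu^2)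
      + ((Xk x - Xmk x) * (Xk' x - mu) + (Xmk x - mu) * (Xk' x - Xmk' x))" for x
    by (simp add: algebra_simps power2_eq_square)
  have "expectation (\<lambda>x. (Xk x - mu) * (Xk' x - mu)) =
     expectation (\<lambda>x. Xmk x * Xmk' x - mu * Xmk' x - mu * Xmk x + mu^2)
     + expectation (\<lambda>x. (Xk x - Xmk x) * (Xk' x - mu) + (Xmk x - mu) * (Xk' x - Xmk' x))"
    unfolding pw by (rule Bochner_Integration.integral_add) (use i3 in auto)
  also have "expectation (\<lambda>x. Xmk x * Xmk' x - mu * Xmk' x - mu * Xmk x + mu^2)
     = (expectation Xmk - mu) * (expectation Xmk' - mu)"
    using ind by (simp add: prob_space algebra_simps power2_eq_square)
  finally have eq: "expectation (\<lambda>x. (Xk x - mu) * (Xk' x - mu)) =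
     (expectation Xmk - mu) * (expectation Xmk' - mu) +
     expectation (\<lambda>x. (Xk x - Xmk x) * (Xk' x - mu) + (Xmk x - mu) * (Xk' x - Xmk' x))" .
  have t1: "\<bar>expectation Xmk - mu\<bar> \<le> e"
  proof -
    have "expectation Xmk - mu = expectation (\<lambda>x. Xmk x - Xk x)" using m1 by simp
    also have "\<bar>\<dots>\<bar> \<le> expectation (\<lambda>x. \<bar>Xk x - Xmk x\<bar>)"
      by (rule abs_int_bound) (use i4 in \<open>auto simp: abs_minus_commute\<close>)
    finally show ?thesis using a1 by simp
  qed
  have t2: "\<bar>expectation Xmk' - mu\<bar> \<le> 1"
  proof -
    have "0 \<le> expectation Xmk'" by (rule integral_nonneg_AE) (use b in auto)
    moreover have "expectation Xmk' \<le> expectation (\<lambda>_. 1::real)"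
      using b by (intro integral_mono) auto
    ultimately show ?thesis using mu by (simp add: prob_space)
  qed
  have t3: "\<bar>expectation (\<lambda>x. (Xk x - Xmk x) * (Xk' x - mu) + (Xmk x - mu) * (Xk' x - Xmk' x))\<bar>
      \<le> expectation (\<lambda>x. \<bar>Xk x - Xmk x\<bar> + \<bar>Xk' x - Xmk' x\<bar>)"
  proof (rule abs_int_bound[OF i3])
    show "integrable M (\<lambda>x. \<bar>Xk x - Xmk x\<bar> + \<bar>Xk' x - Xmk' x\<bar>)" using i4 by auto
    fix x assume x: "x \<in> space M"
    have "\<bar>(Xk x - Xmk x) * (Xk' x - mu)\<bar> \<le> \<bar>Xk x - Xmk x\<bar>"
      using b(2)[OF x] mu by (auto simp: abs_mult intro!: mult_left_le)
    moreover have "\<bar>(Xmk x - mu) * (Xk' x - Xmk' x)\<bar> \<le> \<bar>Xk' x - Xmk' x\<bar>"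
      using b(3)[OF x] mu by (auto simp: abs_mult intro!: mult_left_le_one_le)
    ultimately show "\<bar>(Xk x - Xmk x) * (Xk' x - mu) + (Xmk x - mu) * (Xk' x - Xmk' x)\<bar>
      \<le> \<bar>Xk x - Xmk x\<bar> + \<bar>Xk' x - Xmk' x\<bar>" by linarith
  qed
  also have "\<dots> \<le> 2 * e" using a1 a2 i4 by simp
  finally have t3': "\<bar>expectation (\<lambda>x. (Xk x - Xmk x) * (Xk' x - mu) + (Xmk x - mu) * (Xk' x - Xmk' x))\<bar> \<le> 2 * e" .
  have "\<bar>(expectation Xmk - mu) * (expectation Xmk' - mu)\<bar> \<le> e * 1"
    unfolding abs_mult by (rule mult_mono) (use t1 t2 in auto)
  with t3' show ?thesis unfolding eq by linarith
qed

lemma card_near: "card {k'. k' < (N::nat) \<and> k < k' + L \<and> k' < k + L} \<le> 2 * L"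
proof -
  have "{k'. k' < (N::nat) \<and> k < k' + L \<and> k' < k + L} \<subseteq> {k + 1 - L..<k + L}" by auto
  then have "card {k'. k' < (N::nat) \<and> k < k' + L \<and> k' < k + L} \<le> card {k + 1 - L..<k + L}"
    by (intro card_mono) auto
  also have "\<dots> \<le> 2 * L" by simp
  finally show ?thesis .
qed

lemma (in prob_space) wlln_approx:
  fixes X :: "nat \<Rightarrow> 'a \<Rightarrow> real" and Xm :: "nat \<Rightarrow> nat \<Rightarrow> 'a \<Rightarrow> real"
    and e :: "nat \<Rightarrow> real" and L :: "nat \<Rightarrow> nat" and mu :: real
  assumes Xmeas[measurable]: "\<And>k. X k \<in> borel_measurable M"
  and Xmmeas[measurable]: "\<And>m k. Xm m k \<in> borel_measurable M"
  and Xb: "\<And>k x. x \<in> space M \<Longrightarrow> 0 \<le> X k x \<and> X k x \<le> 1"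
  and Xmb: "\<And>m k x. x \<in> space M \<Longrightarrow> 0 \<le> Xm m k x \<and> Xm m k x \<le> 1"
  and mean: "\<And>k. expectation (X k) = mu"
  and appr: "\<And>m k. expectation (\<lambda>x. \<bar>X k x - Xm m k x\<bar>) \<le> e m"
  and e0: "e \<longlonglongrightarrow> 0"
  and ind: "\<And>m k k'. k + L m \<le> k' \<Longrightarrow>
      expectation (\<lambda>x. Xm m k x * Xm m k' x) = expectation (Xm m k) * expectation (Xm m k')"
  and ep: "\<epsilon> > 0"
  shows "(\<lambda>N. prob {x\<in>space M. \<epsilon> < \<bar>(\<Sum>k<N. X k x) / real N - mu\<bar>}) \<longlonglongrightarrow> 0"
proof -
  have mu: "0 \<le> mu" "mu \<le> 1"
  proof -
    show "0 \<le> mu" unfolding mean[of 0, symmetric] by (rule integral_nonneg_AE) (use Xb in auto)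
    have "expectation (X 0) \<le> expectation (\<lambda>_. 1::real)"
      using Xb by (intro integral_mono integrable_bdd[where B=1]) auto
    then show "mu \<le> 1" using mean[of 0] by (simp add: prob_space)
  qed
  have enn: "0 \<le> e m" for m
  proof -
    have "0 \<le> expectation (\<lambda>x. \<bar>X 0 x - Xm m 0 x\<bar>)" by (rule integral_nonneg_AE) auto
    then show ?thesis using appr[of 0 m] by linarith
  qed
  have Xd: "\<bar>X k x - mu\<bar> \<le> 1" if "x \<in> space M" for k x using Xb[OF that, of k] mu by auto
  have cov1: "\<bar>expectation (\<lambda>x. (X k x - mu) * (X k' x - mu))\<bar> \<le> 1" for k k'
  proof -
    have "\<bar>expectation (\<lambda>x. (X k x - mu) * (X k' x - mu))\<bar> \<le> expectation (\<lambda>_. 1::real)"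
    proof (rule abs_int_bound)
      show "integrable M (\<lambda>x. (X k x - mu) * (X k' x - mu))"
        by (rule integrable_bdd[where B=1]) (use Xd in \<open>auto intro!: abs_prod_le1\<close>)
    qed (use Xd in \<open>auto intro!: abs_prod_le1\<close>)
    then show ?thesis by (simp add: prob_space)
  qed
  have covfar0: "\<bar>expectation (\<lambda>x. (X k x - mu) * (X k' x - mu))\<bar> \<le> 3 * e m" if "k + L m \<le> k'" for m k k'
    by (rule cov_far[where Xmk="Xm m k" and Xmk'="Xm m k'"])
       (use Xb Xmb mu mean appr ind[OF that] in auto)
  have covfar: "\<bar>expectation (\<lambda>x. (X k x - mu) * (X k' x - mu))\<bar> \<le> 3 * e m"
    if "k + L m \<le> k' \<or> k' + L m \<le> k" for m k k'
    using that
  proof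
    assume "k' + L m \<le> k"
    from covfar0[OF this] show ?thesis by (simp add: mult.commute)
  qed (rule covfar0)
  define S where "S N x = (\<Sum>k<N. X k x - mu)" for N x
  have Smeas[measurable]: "S N \<in> borel_measurable M" for N unfolding S_def by measurable
  have intprod: "integrable M (\<lambda>x. (X k x - mu) * (X k' x - mu))" for k k'
    by (rule integrable_bdd[where B=1]) (use Xd in \<open>auto intro!: abs_prod_le1\<close>)
  have ES: "expectation (\<lambda>x. (S N x)^2) \<le> real N * (3 * e m * real N + 2 * real (L m))" for N m
  proof -
    have "expectation (\<lambda>x. (S N x)^2) = expectation (\<lambda>x. \<Sum>k<N. \<Sum>k'<N. (X k x - mu) * (X k' x - mu))"
      unfolding S_def power2_eq_square sum_product by simp
    also have "\<dots> = (\<Sum>k<N. \<Sum>k'<N. expectation (\<lambda>x. (X k x - mu) * (X k' x - mu)))"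
      using intprod by (simp add: Bochner_Integration.integral_sum)
    also have "\<dots> \<le> (\<Sum>k<N. \<Sum>k'<N. (3 * e m + (if k < k' + L m \<and> k' < k + L m then 1 else 0)))"
    proof (intro sum_mono)
      fix k k'
      show "expectation (\<lambda>x. (X k x - mu) * (X k' x - mu)) \<le> 3 * e m + (if k < k' + L m \<and> k' < k + L m then 1 else 0)"
      proof (cases "k < k' + L m \<and> k' < k + L m")
        case True then show ?thesis using cov1[of k k'] enn[of m] by auto
      next
        case False then have "k + L m \<le> k' \<or> k' + L m \<le> k" by auto
        then show ?thesis using covfar[of k m k'] False by auto
      qed
    qed
    also have "\<dots> = (\<Sum>k<N. 3 * e m * real N + real (card {k'. k' < N \<and> k < k' + L m \<and> k' < k + L m}))"
    proof (rule sum.cong[OF refl])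
      fix k
      have "(\<Sum>k'<N. (if k < k' + L m \<and> k' < k + L m then 1 else 0::real)) =
         real (card {k'. k' < N \<and> k < k' + L m \<and> k' < k + L m})"
        by (subst sum.If_cases) (auto intro!: arg_cong[where f=card])
      then show "(\<Sum>k'<N. 3 * e m + (if k < k' + L m \<and> k' < k + L m then 1 else 0)) =
         3 * e m * real N + real (card {k'. k' < N \<and> k < k' + L m \<and> k' < k + L m})"
        by (simp add: sum.distrib)
    qed
    also have "\<dots> \<le> (\<Sum>k<N. 3 * e m * real N + 2 * real (L m))"
    proof (intro sum_mono add_left_mono)
    fix k
    have "card {k'. k' < N \<and> k < k' + L m \<and> k' < k + L m} \<le> 2 * L m" by (rule card_near)
    then have "real (card {k'. k' < N \<and> k < k' + L m \<and> k' < k + L m}) \<le> real (2 * L m)" by (simp only: of_nat_le_iff)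
    then show "real (card {k'. k' < N \<and> k < k' + L m \<and> k' < k + L m}) \<le> 2 * real (L m)" by simp
  qed
    also have "\<dots> = real N * (3 * e m * real N + 2 * real (L m))" by simp
    finally show ?thesis .
  qed
  have bound: "prob {x\<in>space M. \<epsilon> < \<bar>(\<Sum>k<N. X k x) / real N - mu\<bar>}
      \<le> 3 * e m / \<epsilon>^2 + 2 * real (L m) / (\<epsilon>^2 * real N)" if N: "N > 0" for N m
  proof -
    have eqS: "(\<Sum>k<N. X k x) / real N - mu = S N x / real N" for x
      using N by (simp add: S_def sum_subtractf field_simps)
    have "prob {x\<in>space M. \<epsilon> < \<bar>(\<Sum>k<N. X k x) / real N - mu\<bar>}
        \<le> prob {x\<in>space M. (\<epsilon> * real N)^2 \<le> (S N x)^2}"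
    proof (rule finite_measure_mono)
      show "{x\<in>space M. (\<epsilon> * real N)^2 \<le> (S N x)^2} \<in> events" by measurable
      show "{x \<in> space M. \<epsilon> < \<bar>(\<Sum>k<N. X k x) / real N - mu\<bar>} \<subseteq> {x \<in> space M. (\<epsilon> * real N)\<^sup>2 \<le> (S N x)\<^sup>2}"
      proof safe
        fix x assume "x \<in> space M" "\<epsilon> < \<bar>(\<Sum>k<N. X k x) / real N - mu\<bar>"
        then have "\<epsilon> < \<bar>S N x\<bar> / real N" unfolding eqS by simp
        then have "\<epsilon> * real N < \<bar>S N x\<bar>" using N by (simp add: field_simps)
        then have "(\<epsilon> * real N)^2 \<le> \<bar>S N x\<bar>^2" using ep N by (intro power_mono) auto
        then show "(\<epsilon> * real N)^2 \<le> (S N x)^2" by simp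
      qed
    qed
    also have "\<dots> \<le> expectation (\<lambda>x. (S N x)^2) / (\<epsilon> * real N)^2"
    proof (rule integral_Markov_inequality_measure)
      show "integrable M (\<lambda>x. (S N x)^2)"
        unfolding S_def power2_eq_square sum_product using intprod by auto
    qed (use ep N in auto)
    also have "\<dots> \<le> real N * (3 * e m * real N + 2 * real (L m)) / (\<epsilon> * real N)^2"
      by (intro divide_right_mono ES) auto
    also have "\<dots> = 3 * e m / \<epsilon>^2 + 2 * real (L m) / (\<epsilon>^2 * real N)"
      using N ep by (simp add: field_simps power2_eq_square)
    finally show ?thesis .
  qed
  show ?thesis
  proof (rule LIMSEQ_I)
    fix r :: real assume r: "r > 0"
    have "eventually (\<lambda>m. e m < r * \<epsilon>^2 / 6) sequentially"
      using e0 r ep by (intro order_tendstoD(2)) auto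
    then obtain m where m: "e m < r * \<epsilon>^2 / 6" by (auto simp: eventually_sequentially)
    then have m': "3 * e m / \<epsilon>^2 < r / 2" using ep by (simp add: field_simps)
    obtain N0 :: nat where N0: "real N0 > 4 * real (L m) / (\<epsilon>^2 * r)" using reals_Archimedean2 by blast
    show "\<exists>no. \<forall>n\<ge>no. norm (prob {x\<in>space M. \<epsilon> < \<bar>(\<Sum>k<n. X k x) / real n - mu\<bar>} - 0) < r"
    proof (intro exI allI impI)
      fix n assume n: "n \<ge> Suc N0"
      then have npos: "n > 0" by auto
      have "2 * real (L m) / (\<epsilon>^2 * real n) < r / 2"
      proof -
        have "real n > 4 * real (L m) / (\<epsilon>^2 * r)" using N0 n by linarith
        then have "real n * (\<epsilon>^2 * r) > 4 * real (L m)" using ep r by (simp add: field_simps)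
        then show ?thesis using ep r npos by (simp add: field_simps)
      qed
      with bound[OF npos, of m] m' show "norm (prob {x\<in>space M. \<epsilon> < \<bar>(\<Sum>k<n. X k x) / real n - mu\<bar>} - 0) < r"
        by simp
    qed
  qed
qed

definition Wv :: "(int \<Rightarrow> 'a \<Rightarrow> real) \<Rightarrow> int \<Rightarrow> 'a \<Rightarrow> nat \<Rightarrow> real" where
  "Wv eps s \<omega> = (\<lambda>l. eps (s - int l) \<omega>)"

locale arsetting = prob_space M for M :: "'a measure" +
  fixes eps Y :: "int \<Rightarrow> 'a \<Rightarrow> real" and a :: "nat \<Rightarrow> real"
  assumes indep: "indep_vars (\<lambda>_. borel) eps UNIV"
  and ident: "\<forall>s. distr M borel (eps s) = distr M borel (eps 0)"
  and Y_meas: "\<forall>s. Y s \<in> borel_measurable M"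
  and Y_MA: "\<forall>s. AE \<omega> in M. (\<lambda>i. a i * eps (s - int i) \<omega>) sums Y s \<omega>"
begin

definition "D = distr M borel (eps 0)"
definition "Pinf = PiM (UNIV::nat set) (\<lambda>_. D)"

lemma eps_meas[measurable]: "eps s \<in> borel_measurable M"
  using indep by (auto simp: indep_vars_def)

lemma D_prob: "prob_space D"
  unfolding D_def by (rule prob_space_distr) simp

lemma Pinf_prob: "prob_space Pinf"
  unfolding Pinf_def using D_prob by (intro prob_space_PiM) auto

lemma sets_Pinf: "sets Pinf = sets (PiM (UNIV::nat set) (\<lambda>_. borel))"
  unfolding Pinf_def D_def by (intro sets_PiM_cong) auto

lemma W_meas: "Wv eps s \<in> measurable M Pinf"
  unfolding Wv_def
  by (subst measurable_cong_sets[OF refl sets_Pinf]) (auto intro!: measurable_PiM_single')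

lemma distr_W: "distr M Pinf (Wv eps s) = Pinf"
proof -
  let ?E = "\<lambda>\<omega>. \<lambda>i\<in>(UNIV::int set). eps i \<omega>"
  have "distr M (PiM UNIV (\<lambda>_::int. borel)) ?E = PiM UNIV (\<lambda>i. distr M borel (eps i))"
    using indep by (subst indep_vars_iff_distr_eq_PiM'[symmetric]) auto
  also have "\<dots> = PiM UNIV (\<lambda>_. D)"
    using ident unfolding D_def by (intro PiM_cong) auto
  finally have E1: "distr M (PiM UNIV (\<lambda>_::int. borel)) ?E = PiM UNIV (\<lambda>_. D)" .
  have E2: "distr M (PiM UNIV (\<lambda>_::int. D)) ?E = PiM UNIV (\<lambda>_. D)"
    by (subst E1[symmetric], rule distr_cong) (auto simp: D_def intro!: sets_PiM_cong)
  define f where "f = (\<lambda>n::nat. s - int n)"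
  have injf: "inj_on f UNIV" unfolding f_def by (auto simp: inj_on_def)
  have meR: "(\<lambda>\<omega>. \<lambda>n\<in>UNIV. \<omega> (f n)) \<in> measurable (PiM UNIV (\<lambda>_::int. D)) Pinf"
    unfolding Pinf_def by (auto intro!: measurable_PiM_single')
  have meE: "?E \<in> measurable M (PiM UNIV (\<lambda>_::int. D))"
    unfolding D_def by (auto intro!: measurable_PiM_single')
  have "distr M Pinf (Wv eps s) = distr (distr M (PiM UNIV (\<lambda>_::int. D)) ?E) Pinf (\<lambda>\<omega>. \<lambda>n\<in>UNIV. \<omega> (f n))"
    by (subst distr_distr[OF meR meE]) (auto simp: Wv_def f_def comp_def intro!: distr_cong)
  also have "\<dots> = distr (PiM UNIV (\<lambda>_::int. D)) (PiM UNIV (\<lambda>i. (\<lambda>_::int. D) (f i))) (\<lambda>\<omega>. \<lambda>n\<in>UNIV. \<omega> (f n))"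
    unfolding E2 Pinf_def by simp
  also have "\<dots> = PiM UNIV (\<lambda>i. (\<lambda>_::int. D) (f i))"
    by (rule distr_PiM_reindex) (use D_prob injf in auto)
  finally show ?thesis unfolding Pinf_def by simp
qed

end

definition Gf :: "(nat \<Rightarrow> real) \<Rightarrow> (nat \<Rightarrow> real) \<Rightarrow> real" where
  "Gf a w = lim (\<lambda>m. \<Sum>i<m. a i * w i)"
definition Vt :: "nat \<Rightarrow> (nat \<Rightarrow> real) \<Rightarrow> (nat \<Rightarrow> real) \<Rightarrow> (nat \<Rightarrow> real) \<Rightarrow> real" where
  "Vt d c a w = (\<Sum>j<d. c j * Gf a (\<lambda>l. w (l + j)))"
definition Vm :: "nat \<Rightarrow> (nat \<Rightarrow> real) \<Rightarrow> (nat \<Rightarrow> real) \<Rightarrow> nat \<Rightarrow> (nat \<Rightarrow> real) \<Rightarrow> real" where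
  "Vm d c a m w = (\<Sum>j<d. c j * (\<Sum>i<m. a i * w (i + j)))"

lemma Gf_meas[measurable]: "Gf a \<in> borel_measurable (PiM UNIV (\<lambda>_. borel))"
  unfolding Gf_def by measurable

lemma Vt_meas[measurable]: "Vt d c a \<in> borel_measurable (PiM UNIV (\<lambda>_. borel))"
proof -
  have "(\<lambda>w. Gf a (\<lambda>l. w (l + j))) \<in> borel_measurable (PiM UNIV (\<lambda>_. borel))" for j
  proof -
    have sh: "(\<lambda>w l. w (l + j)) \<in> measurable (PiM UNIV (\<lambda>_. borel)) (PiM UNIV (\<lambda>_. borel))"
      by (rule measurable_PiM_single') auto
    have "Gf a \<circ> (\<lambda>w l. w (l + j)) \<in> borel_measurable (PiM UNIV (\<lambda>_. borel))"
      by (rule measurable_comp[OF sh Gf_meas])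
    then show ?thesis by (simp add: comp_def)
  qed
  then show ?thesis unfolding Vt_def by measurable
qed

lemma Vm_meas[measurable]: "Vm d c a m \<in> borel_measurable (PiM UNIV (\<lambda>_. borel))"
  unfolding Vm_def by measurable

lemma Vm_local: "(\<And>l. l < m + d \<Longrightarrow> w l = w' l) \<Longrightarrow> Vm d c a m w = Vm d c a m w'"
  unfolding Vm_def by (intro sum.cong refl arg_cong2[where f="(*)"]) auto

context arsetting
begin

lemma Gf_meas'[measurable]: "Gf a \<in> borel_measurable Pinf"
  using Gf_meas measurable_cong_sets[OF sets_Pinf refl] by blast
lemma Vt_meas'[measurable]: "Vt d c a \<in> borel_measurable Pinf"
  using Vt_meas measurable_cong_sets[OF sets_Pinf refl] by blast
lemma Vm_meas'[measurable]: "Vm d c a m \<in> borel_measurable Pinf"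
  using Vm_meas measurable_cong_sets[OF sets_Pinf refl] by blast
lemmas W_meas'[measurable] = W_meas

definition "Om = {\<omega>. \<forall>s. (\<lambda>i. a i * eps (s - int i) \<omega>) sums Y s \<omega>}"

lemma AE_Om: "AE \<omega> in M. \<omega> \<in> Om"
  unfolding Om_def using Y_MA by (simp add: AE_all_countable)

lemma W_shift: "Wv eps (s - int j) \<omega> = (\<lambda>l. Wv eps s \<omega> (l + j))"
  unfolding Wv_def by (auto simp: algebra_simps)

lemma Y_rep: "\<omega> \<in> Om \<Longrightarrow> Y s \<omega> = Gf a (Wv eps s \<omega>)"
  unfolding Om_def Gf_def Wv_def sums_def by (auto intro!: limI[symmetric])

lemma lin_rep: "\<omega> \<in> Om \<Longrightarrow> lin_pred d c Y s \<omega> = Vt d c a (Wv eps s \<omega>)"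
  unfolding lin_pred_def Vt_def using Y_rep[of \<omega> "s - int _"] W_shift by simp

lemma Vm_conv: "\<omega> \<in> Om \<Longrightarrow> (\<lambda>m. Vm d c a m (Wv eps s \<omega>)) \<longlonglongrightarrow> Vt d c a (Wv eps s \<omega>)"
proof -
  assume om: "\<omega> \<in> Om"
  have "(\<lambda>m. \<Sum>i<m. a i * Wv eps s \<omega> (i + j)) \<longlonglongrightarrow> Gf a (\<lambda>l. Wv eps s \<omega> (l + j))" for j
  proof -
    have "(\<lambda>i. a i * eps (s - int j - int i) \<omega>) sums Y (s - int j) \<omega>" using om unfolding Om_def by blast
    then have "(\<lambda>m. \<Sum>i<m. a i * eps (s - int j - int i) \<omega>) \<longlonglongrightarrow> Y (s - int j) \<omega>" by (simp add: sums_def)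
    moreover have "Y (s - int j) \<omega> = Gf a (\<lambda>l. Wv eps s \<omega> (l + j))"
      using Y_rep[OF om, of "s - int j"] W_shift by simp
    ultimately show ?thesis by (simp add: Wv_def algebra_simps)
  qed
  then show ?thesis unfolding Vm_def Vt_def by (intro tendsto_intros)
qed

end

context arsetting
begin

lemma int_W: "(f :: (nat \<Rightarrow> real) \<Rightarrow> real) \<in> borel_measurable Pinf \<Longrightarrow> expectation (\<lambda>\<omega>. f (Wv eps s \<omega>)) = integral\<^sup>L Pinf f"
  using integral_distr[OF W_meas, of f s] distr_W[of s] by simp

lemma wlln_ind:
  assumes atom: "prob {\<omega>\<in>space M. lin_pred d c Y t \<omega> = y} = 0" and ep: "\<epsilon> > 0"
  shows "(\<lambda>N. prob {\<omega>\<in>space M. \<epsilon> < \<bar>(\<Sum>k<N. if lin_pred d c Y (t - int k) \<omega> \<le> y then 1 else 0) / real N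
            - prob {\<omega>\<in>space M. lin_pred d c Y t \<omega> \<le> y}\<bar>}) \<longlonglongrightarrow> 0"
proof -
  have Ym[measurable]: "Y s \<in> borel_measurable M" for s using Y_meas by auto
  define X where "X k \<omega> = (if Vt d c a (Wv eps (t - int k) \<omega>) \<le> y then 1 else 0::real)" for k \<omega>
  define Xm where "Xm m k \<omega> = (if Vm d c a m (Wv eps (t - int k) \<omega>) \<le> y then 1 else 0::real)" for m k \<omega>
  define e where "e m = expectation (\<lambda>\<omega>. \<bar>X 0 \<omega> - Xm m 0 \<omega>\<bar>)" for m
  define mu where "mu = expectation (X 0)"
  have Xmeas[measurable]: "X k \<in> borel_measurable M" for k unfolding X_def by measurable
  have Xmmeas[measurable]: "Xm m k \<in> borel_measurable M" for m k unfolding Xm_def by measurable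
  have meanX: "expectation (X k) = mu" for k
  proof -
    have "expectation (X k) = integral\<^sup>L Pinf (\<lambda>w. if Vt d c a w \<le> y then 1 else 0::real)"
      unfolding X_def by (rule int_W) measurable
    also have "\<dots> = expectation (X 0)"
      unfolding X_def by (rule int_W[symmetric]) measurable
    finally show ?thesis unfolding mu_def .
  qed
  have appr: "expectation (\<lambda>\<omega>. \<bar>X k \<omega> - Xm m k \<omega>\<bar>) \<le> e m" for m k
  proof -
    have "expectation (\<lambda>\<omega>. \<bar>X k \<omega> - Xm m k \<omega>\<bar>) =
       integral\<^sup>L Pinf (\<lambda>w. \<bar>(if Vt d c a w \<le> y then 1 else 0::real) - (if Vm d c a m w \<le> y then 1 else 0)\<bar>)"
      unfolding X_def Xm_def by (rule int_W) measurable
    also have "\<dots> = e m"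
      unfolding X_def Xm_def e_def by (rule int_W[symmetric]) measurable
    finally show ?thesis by simp
  qed
  have AEgood: "AE \<omega> in M. \<omega> \<in> Om \<and> lin_pred d c Y t \<omega> \<noteq> y"
  proof -
    have "AE \<omega> in M. lin_pred d c Y t \<omega> \<noteq> y"
    proof (rule AE_I[where N="{\<omega>\<in>space M. lin_pred d c Y t \<omega> = y}"])
      show "{\<omega>\<in>space M. lin_pred d c Y t \<omega> = y} \<in> events" unfolding lin_pred_def by measurable
      then show "emeasure M {\<omega>\<in>space M. lin_pred d c Y t \<omega> = y} = 0"
        using atom by (simp add: emeasure_eq_measure)
    qed auto
    with AE_Om show ?thesis by eventually_elim auto
  qed
  have e0: "e \<longlonglongrightarrow> 0"
  proof -
    have "(\<lambda>m. expectation (\<lambda>\<omega>. \<bar>X 0 \<omega> - Xm m 0 \<omega>\<bar>)) \<longlonglongrightarrow> expectation (\<lambda>_. 0::real)"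
    proof (rule integral_dominated_convergence[where w="\<lambda>_. 1"])
      show "AE \<omega> in M. (\<lambda>m. \<bar>X 0 \<omega> - Xm m 0 \<omega>\<bar>) \<longlonglongrightarrow> 0"
        using AEgood
      proof eventually_elim
        case (elim \<omega>)
        then have om: "\<omega> \<in> Om" and ne: "lin_pred d c Y t \<omega> \<noteq> y" by auto
        have conv: "(\<lambda>m. Vm d c a m (Wv eps t \<omega>)) \<longlonglongrightarrow> Vt d c a (Wv eps t \<omega>)" by (rule Vm_conv[OF om])
        have v: "Vt d c a (Wv eps t \<omega>) = lin_pred d c Y t \<omega>" using lin_rep[OF om] by simp
        have "eventually (\<lambda>m. \<bar>X 0 \<omega> - Xm m 0 \<omega>\<bar> = 0) sequentially"
        proof (cases "lin_pred d c Y t \<omega> < y")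
          case True
          then have "eventually (\<lambda>m. Vm d c a m (Wv eps t \<omega>) < y) sequentially"
            using conv v by (intro order_tendstoD(2)) auto
          then show ?thesis by eventually_elim (use True v in \<open>auto simp: X_def Xm_def\<close>)
        next
          case False
          then have gt: "lin_pred d c Y t \<omega> > y" using ne by auto
          then have "eventually (\<lambda>m. Vm d c a m (Wv eps t \<omega>) > y) sequentially"
            using conv v by (intro order_tendstoD(1)) auto
          then show ?thesis by eventually_elim (use gt v in \<open>auto simp: X_def Xm_def\<close>)
        qed
        then show ?case by (rule tendsto_eventually)
      qed
    qed (auto simp: X_def Xm_def)
    then show ?thesis unfolding e_def by simp
  qed
  have ind: "expectation (\<lambda>\<omega>. Xm m k \<omega> * Xm m k' \<omega>) = expectation (Xm m k) * expectation (Xm m k')"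
    if kk: "k + (m + d) \<le> k'" for m k k'
  proof -
    define I where "I k = {t - int k - int (m + d) + 1 .. t - int k}" for k
    have disj: "I k \<inter> I k' = {}" using kk by (auto simp: I_def)
    have iv: "indep_var (PiM (I k) (\<lambda>_. borel)) (\<lambda>\<omega>. restrict (\<lambda>i. eps i \<omega>) (I k))
                        (PiM (I k') (\<lambda>_. borel)) (\<lambda>\<omega>. restrict (\<lambda>i. eps i \<omega>) (I k'))"
      by (rule indep_var_restrict[OF indep disj]) auto
    define tr where "tr k r = (\<lambda>l. if l < m + d then r (t - int k - int l) else 0::real)" for k :: nat and r :: "int \<Rightarrow> real"
    define hh where "hh k r = (if Vm d c a m (tr k r) \<le> y then 1 else 0::real)" for k r
    have trm: "tr k \<in> measurable (PiM (I k) (\<lambda>_. borel)) (PiM UNIV (\<lambda>_. borel))" for k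
      unfolding tr_def
    proof (rule measurable_PiM_single')
      fix l :: nat
      show "(\<lambda>r. if l < m + d then r (t - int k - int l) else 0) \<in> borel_measurable (PiM (I k) (\<lambda>_. borel))"
      proof (cases "l < m + d")
        case True
        then have "t - int k - int l \<in> I k" by (auto simp: I_def)
        then show ?thesis using True by simp
      qed simp
    qed auto
    have hhm: "hh k \<in> borel_measurable (PiM (I k) (\<lambda>_. borel))" for k
    proof -
      have "Vm d c a m \<circ> tr k \<in> borel_measurable (PiM (I k) (\<lambda>_. borel))"
        by (rule measurable_comp[OF trm Vm_meas])
      then have [measurable]: "(\<lambda>r. Vm d c a m (tr k r)) \<in> borel_measurable (PiM (I k) (\<lambda>_. borel))"
        by (simp add: comp_def)
      show ?thesis unfolding hh_def by measurable
    qed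
    have eqf: "hh k \<circ> (\<lambda>\<omega>. restrict (\<lambda>i. eps i \<omega>) (I k)) = Xm m k" for k
    proof
      fix \<omega>
      have "Vm d c a m (tr k (restrict (\<lambda>i. eps i \<omega>) (I k))) = Vm d c a m (Wv eps (t - int k) \<omega>)"
        by (rule Vm_local) (auto simp: tr_def I_def Wv_def)
      then show "(hh k \<circ> (\<lambda>\<omega>. restrict (\<lambda>i. eps i \<omega>) (I k))) \<omega> = Xm m k \<omega>"
        by (simp add: hh_def Xm_def)
    qed
    have "indep_var borel (hh k \<circ> (\<lambda>\<omega>. restrict (\<lambda>i. eps i \<omega>) (I k))) borel (hh k' \<circ> (\<lambda>\<omega>. restrict (\<lambda>i. eps i \<omega>) (I k')))"
      by (rule indep_var_compose[OF iv hhm hhm])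
    then have iv2: "indep_var borel (Xm m k) borel (Xm m k')" unfolding eqf .
    show ?thesis
      by (rule indep_var_lebesgue_integral[OF iv2]) (auto intro!: integrable_bdd[where B=1] simp: Xm_def)
  qed
  have lim: "(\<lambda>N. prob {x\<in>space M. \<epsilon> < \<bar>(\<Sum>k<N. X k x) / real N - mu\<bar>}) \<longlonglongrightarrow> 0"
    apply (rule wlln_approx[where X=X and Xm=Xm and e=e and L="\<lambda>m. m + d"])
    apply (rule Xmeas)
    apply (rule Xmmeas)
    apply (simp add: X_def)
    apply (simp add: Xm_def)
    apply (rule meanX)
    apply (rule appr)
    apply (rule e0)
    apply (rule ind, simp)
    apply (rule ep)
    done
  have mu_eq: "mu = prob {\<omega>\<in>space M. lin_pred d c Y t \<omega> \<le> y}"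
  proof -
    have "mu = expectation (indicator {\<omega>\<in>space M. lin_pred d c Y t \<omega> \<le> y})"
      unfolding mu_def
    proof (rule integral_cong_AE)
      show "AE x in M. X 0 x = indicator {\<omega> \<in> space M. lin_pred d c Y t \<omega> \<le> y} x"
        using AE_Om AE_space by eventually_elim (auto simp: X_def lin_rep indicator_def)
      show "indicator {\<omega> \<in> space M. lin_pred d c Y t \<omega> \<le> y} \<in> borel_measurable M"
        unfolding lin_pred_def by measurable
    qed simp
    also have "\<dots> = prob {\<omega>\<in>space M. lin_pred d c Y t \<omega> \<le> y}"
      by (simp add: Int_absorb2 Collect_restrict)
    finally show ?thesis .
  qed
  have "(\<lambda>N. prob {x\<in>space M. \<epsilon> < \<bar>(\<Sum>k<N. X k x) / real N - mu\<bar>}) =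
        (\<lambda>N. prob {\<omega>\<in>space M. \<epsilon> < \<bar>(\<Sum>k<N. if lin_pred d c Y (t - int k) \<omega> \<le> y then 1 else 0) / real N
            - prob {\<omega>\<in>space M. lin_pred d c Y t \<omega> \<le> y}\<bar>})"
  proof (rule ext, rule measure_eq_AE)
    fix N
    show "AE x in M. (x \<in> {x\<in>space M. \<epsilon> < \<bar>(\<Sum>k<N. X k x) / real N - mu\<bar>}) =
      (x \<in> {\<omega>\<in>space M. \<epsilon> < \<bar>(\<Sum>k<N. if lin_pred d c Y (t - int k) \<omega> \<le> y then 1 else 0) / real N
            - prob {\<omega>\<in>space M. lin_pred d c Y t \<omega> \<le> y}\<bar>})"
      using AE_Om AE_space by eventually_elim (auto simp: X_def lin_rep mu_eq)
  qed (unfold lin_pred_def, measurable)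
  with lim show ?thesis by simp
qed

end

lemma pc_Suc: "pred_coef d p (Suc h) = mat_vec d (companion_mat p) (pred_coef d p h)"
  unfolding pred_coef_def by simp

lemma pc_meas:
  assumes "\<And>i. (\<lambda>\<omega>. p \<omega> i) \<in> borel_measurable M"
  shows "(\<lambda>\<omega>. pred_coef d (p \<omega>) h i) \<in> borel_measurable M"
proof (induction h arbitrary: i)
  case 0 then show ?case by (simp add: pred_coef_def unit_vec_def)
next
  case (Suc h)
  have [measurable]: "(\<lambda>\<omega>. pred_coef d (p \<omega>) h j) \<in> borel_measurable M" for j by (rule Suc.IH)
  have [measurable]: "(\<lambda>\<omega>. p \<omega> i) \<in> borel_measurable M" for i by (rule assms)
  show ?case unfolding pc_Suc mat_vec_def companion_mat_def by measurable
qed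

lemma pc_lip:
  "\<exists>K\<ge>0. \<forall>\<psi> r. 0 \<le> r \<and> r \<le> 1 \<and> (\<forall>i<d. \<bar>\<psi> i - phi i\<bar> \<le> r) \<longrightarrow>
      (\<forall>i<d. \<bar>pred_coef d \<psi> h i - pred_coef d phi h i\<bar> \<le> K * r)"
proof (induction h)
  case 0 then show ?case by (auto simp: pred_coef_def)
next
  case (Suc h)
  then obtain K where K0: "K \<ge> 0" and K: "\<And>\<psi> r i. 0 \<le> r \<Longrightarrow> r \<le> 1 \<Longrightarrow> (\<forall>i<d. \<bar>\<psi> i - phi i\<bar> \<le> r) \<Longrightarrow> i < d \<Longrightarrow>
      \<bar>pred_coef d \<psi> h i - pred_coef d phi h i\<bar> \<le> K * r" by blast
  define B where "B = (\<Sum>i<d. \<bar>pred_coef d phi h i\<bar>)"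
  define P where "P = (\<Sum>i<d. \<bar>phi i\<bar>)"
  have B0: "B \<ge> 0" and P0: "P \<ge> 0" unfolding B_def P_def by (auto intro: sum_nonneg)
  have Bi: "\<bar>pred_coef d phi h i\<bar> \<le> B" if "i < d" for i
    unfolding B_def using that by (intro member_le_sum) auto
  have Pi: "\<bar>phi i\<bar> \<le> P" if "i < d" for i
    unfolding P_def using that by (intro member_le_sum) auto
  show ?case
  proof (intro exI[of _ "real d * (B + K + P * K)"] conjI allI impI)
    show "0 \<le> real d * (B + K + P * K)" using B0 K0 P0 by auto
    fix \<psi> r i assume as: "0 \<le> r \<and> r \<le> 1 \<and> (\<forall>i<d. \<bar>\<psi> i - phi i\<bar> \<le> r)" and i: "i < d"
    let ?u = "pred_coef d \<psi> h" and ?v = "pred_coef d phi h"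
    have uv: "\<bar>?u j - ?v j\<bar> \<le> K * r" if "j < d" for j using K as that by blast
    have trm: "\<bar>companion_mat \<psi> i j * ?u j - companion_mat phi i j * ?v j\<bar> \<le> r * (B + K + P * K)"
      if j: "j < d" for j
    proof (cases "j = 0")
      case True
      have "\<bar>\<psi> i * ?u j - phi i * ?v j\<bar> = \<bar>(\<psi> i - phi i) * ?u j + phi i * (?u j - ?v j)\<bar>"
        by (simp add: algebra_simps)
      also have "\<dots> \<le> \<bar>\<psi> i - phi i\<bar> * \<bar>?u j\<bar> + \<bar>phi i\<bar> * \<bar>?u j - ?v j\<bar>"
        by (metis abs_mult abs_triangle_ineq)
      also have "\<dots> \<le> r * (B + K) + P * (K * r)"
      proof (intro add_mono mult_mono)
        show "\<bar>?u j\<bar> \<le> B + K"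
          using uv[OF j] Bi[OF j] as K0 by (smt (verit) mult_left_le)
      qed (use as i j Pi uv B0 K0 P0 in auto)
      finally show ?thesis using True by (simp add: companion_mat_def algebra_simps)
    next
      case False
      have "\<bar>companion_mat \<psi> i j * ?u j - companion_mat phi i j * ?v j\<bar> \<le> \<bar>?u j - ?v j\<bar>"
        using False by (auto simp: companion_mat_def)
      also have "\<dots> \<le> K * r" using uv[OF j] .
      also have "\<dots> \<le> r * (B + K + P * K)" using as B0 P0 K0 by (simp add: algebra_simps)
      finally show ?thesis .
    qed
    have "\<bar>pred_coef d \<psi> (Suc h) i - pred_coef d phi (Suc h) i\<bar> =
        \<bar>\<Sum>j<d. companion_mat \<psi> i j * ?u j - companion_mat phi i j * ?v j\<bar>"
      unfolding pc_Suc mat_vec_def by (simp add: sum_subtractf)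
    also have "\<dots> \<le> (\<Sum>j<d. \<bar>companion_mat \<psi> i j * ?u j - companion_mat phi i j * ?v j\<bar>)"
      by (rule sum_abs)
    also have "\<dots> \<le> (\<Sum>j<d. r * (B + K + P * K))" by (intro sum_mono trm) auto
    also have "\<dots> = real d * (B + K + P * K) * r" by simp
    finally show "\<bar>pred_coef d \<psi> (Suc h) i - pred_coef d phi (Suc h) i\<bar> \<le> real d * (B + K + P * K) * r" .
  qed
qed


lemma comp_le_l2: fixes x :: "nat \<Rightarrow> real" and d :: nat shows "i < d \<Longrightarrow> \<bar>x i\<bar> \<le> sqrt (\<Sum>j<d. (x j)^2)"
proof -
  assume "i < d"
  then have "(x i)^2 \<le> (\<Sum>j<d. (x j)^2)" by (intro member_le_sum) auto
  then have "sqrt ((x i)^2) \<le> sqrt (\<Sum>j<d. (x j)^2)" by (rule real_sqrt_le_mono)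
  then show ?thesis by simp
qed

lemma delta_conv:
  assumes P: "prob_space M" and est_meas: "\<forall>n i. (\<lambda>\<omega>. phihat n \<omega> i) \<in> borel_measurable M"
    and consistent: "conv_prob_vec M d phihat phi" and eta: "\<eta> > 0"
  shows "(\<lambda>n. measure M {\<omega>\<in>space M. \<eta> < (\<Sum>i<d. \<bar>pred_coef d (phihat n \<omega>) h i - pred_coef d phi h i\<bar>)}) \<longlonglongrightarrow> 0"
proof -
  interpret prob_space M by (rule P)
  obtain K where K0: "K \<ge> 0" and K: "\<And>\<psi> r i. 0 \<le> r \<Longrightarrow> r \<le> 1 \<Longrightarrow> (\<forall>i<d. \<bar>\<psi> i - phi i\<bar> \<le> r) \<Longrightarrow> i < d \<Longrightarrow>
      \<bar>pred_coef d \<psi> h i - pred_coef d phi h i\<bar> \<le> K * r" using pc_lip[of d phi h] by blast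
  define r0 where "r0 = min 1 (\<eta> / (real d * K + 1))"
  have den: "real d * K + 1 > 0" using K0 by (simp add: add_nonneg_pos)
  have r0: "0 < r0" "r0 \<le> 1" unfolding r0_def using eta den by auto
  have dKr: "real d * K * r0 < \<eta>"
  proof -
    have "real d * K * r0 \<le> real d * K * (\<eta> / (real d * K + 1))"
      unfolding r0_def using K0 by (intro mult_left_mono) auto
    also have "\<dots> < \<eta>" using eta den by (simp add: field_simps)
    finally show ?thesis .
  qed
  have [measurable]: "(\<lambda>\<omega>. phihat n \<omega> i) \<in> borel_measurable M" for n i using est_meas by auto
  have [measurable]: "(\<lambda>\<omega>. pred_coef d (phihat n \<omega>) h i) \<in> borel_measurable M" for n i
    by (rule pc_meas) simp
  have lim: "(\<lambda>n. measure M {\<omega>\<in>space M. r0 < sqrt (\<Sum>i<d. (phihat n \<omega> i - phi i)^2)}) \<longlonglongrightarrow> 0"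
    using consistent r0 unfolding conv_prob_vec_def by auto
  show ?thesis
  proof (rule Lim_null_comparison[OF _ lim], intro always_eventually allI)
    fix n
    have "measure M {\<omega>\<in>space M. \<eta> < (\<Sum>i<d. \<bar>pred_coef d (phihat n \<omega>) h i - pred_coef d phi h i\<bar>)}
        \<le> measure M {\<omega>\<in>space M. r0 < sqrt (\<Sum>i<d. (phihat n \<omega> i - phi i)^2)}"
    proof (rule finite_measure_mono)
      show "{\<omega>\<in>space M. r0 < sqrt (\<Sum>i<d. (phihat n \<omega> i - phi i)^2)} \<in> sets M" by measurable
      show "{\<omega>\<in>space M. \<eta> < (\<Sum>i<d. \<bar>pred_coef d (phihat n \<omega>) h i - pred_coef d phi h i\<bar>)}
         \<subseteq> {\<omega>\<in>space M. r0 < sqrt (\<Sum>i<d. (phihat n \<omega> i - phi i)^2)}"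
      proof safe
        fix \<omega> assume \<omega>: "\<omega> \<in> space M" and gt: "\<eta> < (\<Sum>i<d. \<bar>pred_coef d (phihat n \<omega>) h i - pred_coef d phi h i\<bar>)"
        show "r0 < sqrt (\<Sum>i<d. (phihat n \<omega> i - phi i)^2)"
        proof (rule ccontr)
          assume "\<not> r0 < sqrt (\<Sum>i<d. (phihat n \<omega> i - phi i)^2)"
          then have le: "\<forall>i<d. \<bar>phihat n \<omega> i - phi i\<bar> \<le> r0"
            using comp_le_l2[of _ d "\<lambda>i. phihat n \<omega> i - phi i"] by force
          have "(\<Sum>i<d. \<bar>pred_coef d (phihat n \<omega>) h i - pred_coef d phi h i\<bar>) \<le> (\<Sum>i<d. K * r0)"
            by (intro sum_mono K) (use r0 le in auto)
          also have "\<dots> = real d * K * r0" by simp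
          finally show False using gt dKr by linarith
        qed
      qed
    qed
    then show "norm (measure M {\<omega>\<in>space M. \<eta> < (\<Sum>i<d. \<bar>pred_coef d (phihat n \<omega>) h i - pred_coef d phi h i\<bar>)})
        \<le> measure M {\<omega>\<in>space M. r0 < sqrt (\<Sum>i<d. (phihat n \<omega> i - phi i)^2)}" by simp
  qed
qed

lemma (in prob_space) tail0:
  assumes [measurable]: "f \<in> borel_measurable M"
  shows "(\<lambda>n. prob {\<omega>\<in>space M. real n < f \<omega>}) \<longlonglongrightarrow> 0"
proof -
  have "(\<lambda>n. prob {\<omega>\<in>space M. real n < f \<omega>}) \<longlonglongrightarrow> prob (\<Inter>n. {\<omega>\<in>space M. real n < f \<omega>})"
  proof (rule Lim_measure_decseq)
    show "decseq (\<lambda>n. {\<omega>\<in>space M. real n < f \<omega>})"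
      by (rule decseq_SucI) auto
  qed (auto simp: emeasure_eq_measure)
  moreover have "(\<Inter>n. {\<omega>\<in>space M. real n < f \<omega>}) = {}"
  proof safe
    fix \<omega> assume "\<omega> \<in> (\<Inter>n. {\<omega>\<in>space M. real n < f \<omega>})"
    then have "\<forall>n. real n < f \<omega>" by auto
    moreover obtain n where "f \<omega> < real n" using reals_Archimedean2 by blast
    ultimately show "\<omega> \<in> {}" by (meson less_asym)
  qed
  ultimately show ?thesis by simp
qed

definition At :: "nat \<Rightarrow> (nat \<Rightarrow> real) \<Rightarrow> (nat \<Rightarrow> real) \<Rightarrow> real" where
  "At d a w = (\<Sum>j<d. \<bar>Gf a (\<lambda>l. w (l + j))\<bar>)"

context arsetting
begin

lemma At_meas[measurable]: "At d a \<in> borel_measurable Pinf"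
proof -
  have "(\<lambda>w. Gf a (\<lambda>l. w (l + j))) \<in> borel_measurable Pinf" for j
  proof -
    have sh: "(\<lambda>w l. w (l + j)) \<in> measurable Pinf Pinf"
      unfolding Pinf_def by (rule measurable_PiM_single') (auto simp: space_PiM)
    have "Gf a \<circ> (\<lambda>w l. w (l + j)) \<in> borel_measurable Pinf"
      by (rule measurable_comp[OF sh Gf_meas'])
    then show ?thesis by (simp add: comp_def)
  qed
  then show ?thesis unfolding At_def by measurable
qed

lemma tail_stat:
  "prob {\<omega>\<in>space M. R < (\<Sum>i<d. \<bar>Y (s - int i) \<omega>\<bar>)} = measure Pinf {w\<in>space Pinf. R < At d a w}"
proof -
  have Ym[measurable]: "Y s \<in> borel_measurable M" for s using Y_meas by auto
  have "prob {\<omega>\<in>space M. R < (\<Sum>i<d. \<bar>Y (s - int i) \<omega>\<bar>)} = prob {\<omega>\<in>space M. R < At d a (Wv eps s \<omega>)}"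
  proof (rule measure_eq_AE)
    show "AE x in M. (x \<in> {\<omega>\<in>space M. R < (\<Sum>i<d. \<bar>Y (s - int i) \<omega>\<bar>)}) = (x \<in> {\<omega>\<in>space M. R < At d a (Wv eps s \<omega>)})"
      using AE_Om by eventually_elim (auto simp: At_def Y_rep W_shift)
  qed measurable
  also have "\<dots> = measure (distr M Pinf (Wv eps s)) {w\<in>space Pinf. R < At d a w}"
    by (subst measure_distr[OF W_meas]) (auto intro!: arg_cong[where f="measure M"] measurable_space[OF W_meas])
  also have "\<dots> = measure Pinf {w\<in>space Pinf. R < At d a w}" by (simp add: distr_W)
  finally show ?thesis .
qed

end

lemma atom0:
  assumes "prob_space M" "distributed M lborel X f"
  shows "measure M {\<omega>\<in>space M. X \<omega> = y} = 0"
proof -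
  have Xm: "X \<in> borel_measurable M" and fm: "f \<in> borel_measurable lborel"
    and eq: "distr M lborel X = density lborel f"
    using assms(2) by (auto simp: distributed_def)
  have "AE x in lborel. x \<in> {y} \<longrightarrow> f x = 0" using AE_lborel_singleton[of y] by eventually_elim auto
  then have "{y} \<in> null_sets (density lborel f)"
    by (subst null_sets_density_iff[OF fm]) auto
  then have "measure (distr M lborel X) {y} = 0" unfolding eq by (simp add: measure_eq_0_null_sets)
  then have "measure M (X -` {y} \<inter> space M) = 0" using Xm by (simp add: measure_distr)
  moreover have "X -` {y} \<inter> space M = {\<omega>\<in>space M. X \<omega> = y}" by auto
  ultimately show ?thesis by simp
qed

lemma cdf_cont:
  fixes X :: "'a \<Rightarrow> real"
  assumes P: "prob_space M" and Xm: "X \<in> borel_measurable M"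
    and atom: "\<And>y. measure M {\<omega>\<in>space M. X \<omega> = y} = 0"
  shows "continuous_on UNIV (\<lambda>y. measure M {\<omega>\<in>space M. X \<omega> \<le> y})"
proof -
  interpret prob_space M by (rule P)
  have rd: "real_distribution (distr M borel X)" using Xm by simp
  have eq: "measure M {\<omega>\<in>space M. X \<omega> \<le> y} = cdf (distr M borel X) y" for y
    unfolding cdf_def using Xm by (subst measure_distr) (auto intro!: arg_cong[where f="measure M"])
  have "isCont (cdf (distr M borel X)) y" for y
  proof (subst finite_borel_measure.isCont_cdf[OF real_distribution.finite_borel_measure_M[OF rd]])
    have "measure (distr M borel X) {y} = measure M {\<omega>\<in>space M. X \<omega> = y}"
      using Xm by (subst measure_distr) (auto intro!: arg_cong[where f="measure M"])
    then show "measure (distr M borel X) {y} = 0" using atom by simp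
  qed
  then show ?thesis unfolding eq by (intro continuous_at_imp_continuous_on) auto
qed

lemma lin_pred_diff:
  "\<bar>lin_pred d c' Y s \<omega> - lin_pred d c Y s \<omega>\<bar> \<le> (\<Sum>i<d. \<bar>c' i - c i\<bar>) * (\<Sum>i<d. \<bar>Y (s - int i) \<omega>\<bar>)"
proof -
  let ?A = "(\<Sum>i<d. \<bar>Y (s - int i) \<omega>\<bar>)"
  have "\<bar>lin_pred d c' Y s \<omega> - lin_pred d c Y s \<omega>\<bar> = \<bar>\<Sum>i<d. (c' i - c i) * Y (s - int i) \<omega>\<bar>"
    unfolding lin_pred_def by (simp add: sum_subtractf algebra_simps)
  also have "\<dots> \<le> (\<Sum>i<d. \<bar>(c' i - c i) * Y (s - int i) \<omega>\<bar>)" by (rule sum_abs)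
  also have "\<dots> \<le> (\<Sum>i<d. \<bar>c' i - c i\<bar> * ?A)"
  proof (intro sum_mono)
    fix i assume "i \<in> {..<d}"
    then have "\<bar>Y (s - int i) \<omega>\<bar> \<le> ?A" by (intro member_le_sum) auto
    then show "\<bar>(c' i - c i) * Y (s - int i) \<omega>\<bar> \<le> \<bar>c' i - c i\<bar> * ?A"
      unfolding abs_mult by (intro mult_left_mono) auto
  qed
  also have "\<dots> = (\<Sum>i<d. \<bar>c' i - c i\<bar>) * ?A" by (simp add: sum_distrib_right)
  finally show ?thesis .
qed

lemma sandwich_k:
  fixes vh0 vhk v0 vk ak a0 \<delta> \<eta> R :: real
  assumes "\<bar>vhk - vk\<bar> \<le> \<delta> * ak" "\<bar>vh0 - v0\<bar> \<le> \<delta> * a0" "0 \<le> \<delta>" "\<delta> \<le> \<eta>" "a0 \<le> R" "0 \<le> ak" "0 \<le> a0"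
  shows "(if vk \<le> v0 - 2*\<eta>*R then 1 else 0) - (if R < ak then 1 else 0) \<le> (if vhk \<le> vh0 then 1 else (0::real))"
    and "(if vhk \<le> vh0 then 1 else 0) \<le> (if vk \<le> v0 + 2*\<eta>*R then 1 else 0) + (if R < ak then 1 else (0::real))"
proof -
  have a0R: "\<delta> * a0 \<le> \<eta> * R" using assms by (intro mult_mono) auto
  have akR: "ak \<le> R \<Longrightarrow> \<delta> * ak \<le> \<eta> * R" using assms by (intro mult_mono) auto
  show "(if vk \<le> v0 - 2*\<eta>*R then 1 else 0) - (if R < ak then 1 else 0) \<le> (if vhk \<le> vh0 then 1 else (0::real))"
    using assms a0R akR by (auto split: if_splits)
  show "(if vhk \<le> vh0 then 1 else 0) \<le> (if vk \<le> v0 + 2*\<eta>*R then 1 else 0) + (if R < ak then 1 else (0::real))"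
    using assms a0R akR by (auto split: if_splits)
qed

lemma filterlim_Suc_minus: "filterlim (\<lambda>n::nat. Suc (n - d)) at_top at_top"
  unfolding filterlim_at_top
proof
  fix Z :: nat
  show "eventually (\<lambda>n. Z \<le> Suc (n - d)) sequentially"
    using eventually_ge_at_top[of "Z + d"] by eventually_elim auto
qed

lemma grid_exists:
  fixes u K \<gamma> :: real
  assumes "0 < \<gamma>" "-K-1 \<le> u" "u \<le> K + 1"
  shows "\<exists>j\<le>nat \<lceil>(2*K+2)/\<gamma>\<rceil> + 1. -K-1 + real j * \<gamma> \<le> u \<and> u < -K-1 + real j * \<gamma> + \<gamma>"
proof -
  define j where "j = nat \<lfloor>(u + K + 1) / \<gamma>\<rfloor>"
  have nn: "0 \<le> (u + K + 1) / \<gamma>" using assms by auto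
  have jr: "real j = of_int \<lfloor>(u + K + 1) / \<gamma>\<rfloor>" unfolding j_def using nn by simp
  have "real j \<le> (u + K + 1) / \<gamma>" unfolding jr by linarith
  then have l: "real j * \<gamma> \<le> u + K + 1" using assms by (simp add: field_simps)
  have "(u + K + 1) / \<gamma> < real j + 1" unfolding jr by linarith
  then have r: "u + K + 1 < real j * \<gamma> + \<gamma>" using assms by (simp add: field_simps)
  have "(u + K + 1) / \<gamma> \<le> (2*K+2) / \<gamma>" using assms by (intro divide_right_mono) auto
  then have "\<lfloor>(u + K + 1) / \<gamma>\<rfloor> \<le> \<lceil>(2*K+2)/\<gamma>\<rceil>" by linarith
  then have "j \<le> nat \<lceil>(2*K+2)/\<gamma>\<rceil> + 1" unfolding j_def by linarith
  with l r show ?thesis by (intro exI[of _ j]) auto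
qed

theorem proposition1:
  fixes M :: "'a measure" and eps Y :: "int \<Rightarrow> 'a \<Rightarrow> real"
    and phi :: "nat \<Rightarrow> real" and phihat :: "nat \<Rightarrow> 'a \<Rightarrow> nat \<Rightarrow> real"
    and d h :: nat and t :: int
  assumes P: "prob_space M"
    and d: "d \<ge> 1"
    and roots: "\<forall>z::complex. cmod z \<le> 1 \<longrightarrow>
                  1 - (\<Sum>i<d. complex_of_real (phi i) * z ^ Suc i) \<noteq> 0"
    and indep: "prob_space.indep_vars M (\<lambda>_. borel) eps UNIV"
    and ident: "\<forall>s. distr M borel (eps s) = distr M borel (eps 0)"
    and dens: "\<exists>f. distributed M lborel (eps 0) f"
    and moment: "\<exists>\<delta>>0. integrable M (\<lambda>\<omega>. \<bar>eps 0 \<omega>\<bar> powr \<delta>)"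
    and Y_meas: "\<forall>s. Y s \<in> borel_measurable M"
    and Y_MA: "\<forall>s. AE \<omega> in M. (\<lambda>i. ma_coef d phi i * eps (s - int i) \<omega>) sums Y s \<omega>"
    and Y_AR: "\<forall>s. AE \<omega> in M. Y s \<omega> = (\<Sum>i<d. phi i * Y (s - int (Suc i)) \<omega>) + eps s \<omega>"
    and past: "\<forall>s. prob_space.indep_set M
                     (sets (vimage_algebra (space M) (eps s) borel))
                     (sets (vimage_algebra (space M) (\<lambda>\<omega>. \<lambda>r\<in>{..s - 1}. Y r \<omega>)
                              (PiM {..s - 1} (\<lambda>_. borel))))"
    and h: "h \<ge> 1"
    and est_meas: "\<forall>n i. (\<lambda>\<omega>. phihat n \<omega> i) \<in> borel_measurable M"
    and consistent: "conv_prob_vec M d phihat phi"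
    and Yhat_dens: "\<exists>f. distributed M lborel (lin_pred d (pred_coef d phi h) Y t) f"
  shows "conv_prob M (U_hat d h phihat Y t) (U_star M d h phi Y t)"
proof -
  interpret arsetting M eps Y "ma_coef d phi"
    using P indep ident Y_meas Y_MA by (simp add: arsetting_def arsetting_axioms_def)
  have Ym[measurable]: "Y s \<in> borel_measurable M" for s using Y_meas by auto
  have phm[measurable]: "(\<lambda>\<omega>. phihat n \<omega> i) \<in> borel_measurable M" for n i using est_meas by auto
  have chm[measurable]: "(\<lambda>\<omega>. pred_coef d (phihat n \<omega>) h i) \<in> borel_measurable M" for n i
    by (rule pc_meas) simp
  define c where "c = pred_coef d phi h"
  define V0 where "V0 \<omega> = lin_pred d c Y t \<omega>" for \<omega>
  define F where "F y = prob {\<omega>\<in>space M. lin_pred d c Y t \<omega> \<le> y}" for y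
  define Uh where "Uh n \<omega> = (\<Sum>k<Suc (n - d). if lin_pred d (pred_coef d (phihat n \<omega>) h) Y (t - int k) \<omega>
      \<le> lin_pred d (pred_coef d (phihat n \<omega>) h) Y t \<omega> then 1 else 0) / real (Suc (n - d))" for n \<omega>
  define dl where "dl n \<omega> = (\<Sum>i<d. \<bar>pred_coef d (phihat n \<omega>) h i - c i\<bar>)" for n \<omega>
  define Ab where "Ab k \<omega> = (\<Sum>i<d. \<bar>Y (t - int k - int i) \<omega>\<bar>)" for k \<omega>
  define G where "G N y \<omega> = (\<Sum>k<N. if lin_pred d c Y (t - int k) \<omega> \<le> y then 1 else 0) / real N" for N y \<omega>
  define H where "H N R \<omega> = (\<Sum>k<N. if R < Ab k \<omega> then 1 else 0) / real N" for N R \<omega>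
  have V0m[measurable]: "V0 \<in> borel_measurable M" unfolding V0_def lin_pred_def by measurable
  have linm[measurable]: "lin_pred d c Y s \<in> borel_measurable M" for s unfolding lin_pred_def by measurable
  have Abm[measurable]: "Ab k \<in> borel_measurable M" for k unfolding Ab_def by measurable
  have dlm[measurable]: "dl n \<in> borel_measurable M" for n unfolding dl_def by measurable
  have Gm[measurable]: "G N y \<in> borel_measurable M" for N y unfolding G_def by measurable
  have Hm[measurable]: "H N R \<in> borel_measurable M" for N R unfolding H_def by measurable
  have Uhat_eq: "U_hat d h phihat Y t n \<omega> = Uh n \<omega>" for n \<omega>
    unfolding U_hat_def Uh_def by (simp add: atLeast0AtMost lessThan_Suc_atMost[symmetric])
  have Ustar_eq: "U_star M d h phi Y t \<omega> = F (V0 \<omega>)" for \<omega>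
  proof -
    have Zm: "(\<lambda>\<omega>'. \<lambda>i\<in>{..<d}. Y (t - int i) \<omega>') \<in> measurable M (PiM {..<d} (\<lambda>_. borel))"
      by measurable
    have S: "{z \<in> space (PiM {..<d} (\<lambda>_. (borel :: real measure))). (\<Sum>i<d. c i * z i) \<le> V0 \<omega>}
       \<in> sets (PiM {..<d} (\<lambda>_. (borel :: real measure)))" by measurable
    have "U_star M d h phi Y t \<omega> = prob ((\<lambda>\<omega>'. \<lambda>i\<in>{..<d}. Y (t - int i) \<omega>') -`
        {z \<in> space (PiM {..<d} (\<lambda>_. (borel :: real measure))). (\<Sum>i<d. c i * z i) \<le> V0 \<omega>} \<inter> space M)"
      unfolding U_star_def c_def[symmetric] V0_def[symmetric] by (rule measure_distr[OF Zm S])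
    also have "(\<lambda>\<omega>'. \<lambda>i\<in>{..<d}. Y (t - int i) \<omega>') -`
        {z \<in> space (PiM {..<d} (\<lambda>_. (borel :: real measure))). (\<Sum>i<d. c i * z i) \<le> V0 \<omega>} \<inter> space M
        = {\<omega>'\<in>space M. lin_pred d c Y t \<omega>' \<le> V0 \<omega>}"
      using measurable_space[OF Zm] by (auto simp: lin_pred_def)
    finally show ?thesis unfolding F_def .
  qed
  obtain fd where fd: "distributed M lborel (lin_pred d c Y t) fd" using Yhat_dens unfolding c_def by blast
  have atom: "prob {\<omega>\<in>space M. lin_pred d c Y t \<omega> = y} = 0" for y
    by (rule atom0[OF P fd])
  have Fcont: "continuous_on UNIV F" unfolding F_def by (rule cdf_cont[OF P linm atom])
  have Gmono: "G N y \<omega> \<le> G N y' \<omega>" if "y \<le> y'" for N y y' \<omega>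
    unfolding G_def using that by (intro divide_right_mono sum_mono) auto
  show ?thesis unfolding conv_prob_def
  proof (intro allI impI)
    fix \<epsilon> :: real assume ep: "\<epsilon> > 0"
    show "(\<lambda>n. prob {\<omega>\<in>space M. \<epsilon> < \<bar>U_hat d h phihat Y t n \<omega> - U_star M d h phi Y t \<omega>\<bar>}) \<longlonglongrightarrow> 0"
    proof (rule LIMSEQ_I)
      fix \<zeta> :: real assume ze: "\<zeta> > 0"
      have "(\<lambda>n. prob {\<omega>\<in>space M. real n < Ab 0 \<omega>}) \<longlonglongrightarrow> 0" by (rule tail0) measurable
      then have "eventually (\<lambda>n. prob {\<omega>\<in>space M. real n < Ab 0 \<omega>} < min (\<zeta>/6) (\<zeta>*\<epsilon>/24)) sequentially"
        using ze ep by (intro order_tendstoD(2)) auto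
      then obtain R :: nat where R: "prob {\<omega>\<in>space M. real R < Ab 0 \<omega>} < min (\<zeta>/6) (\<zeta>*\<epsilon>/24)"
        by (auto simp: eventually_sequentially)
      have Rk: "prob {\<omega>\<in>space M. real R < Ab k \<omega>} = prob {\<omega>\<in>space M. real R < Ab 0 \<omega>}" for k
        using tail_stat[of "real R" "t - int k"] tail_stat[of "real R" t] by (simp add: Ab_def)
      have "(\<lambda>n. prob {\<omega>\<in>space M. real n < \<bar>V0 \<omega>\<bar>}) \<longlonglongrightarrow> 0" by (rule tail0) measurable
      then have "eventually (\<lambda>n. prob {\<omega>\<in>space M. real n < \<bar>V0 \<omega>\<bar>} < \<zeta>/6) sequentially"
        using ze by (intro order_tendstoD(2)) auto
      then obtain K :: nat where K: "prob {\<omega>\<in>space M. real K < \<bar>V0 \<omega>\<bar>} < \<zeta>/6"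
        by (auto simp: eventually_sequentially)
      define S where "S = {- real K - 2 .. real K + 2}"
      have "uniformly_continuous_on S F"
        unfolding S_def by (rule compact_uniformly_continuous) (use Fcont in \<open>auto intro: continuous_on_subset\<close>)
      then obtain g0 where g0: "g0 > 0" and uc: "\<And>x x'. x \<in> S \<Longrightarrow> x' \<in> S \<Longrightarrow> dist x' x < g0 \<Longrightarrow> dist (F x') (F x) < \<epsilon>/8"
        unfolding uniformly_continuous_on_def using ep by (metis zero_less_divide_iff zero_less_numeral)
      define gm where "gm = min (g0/3) 1"
      have gm: "0 < gm" "gm \<le> 1" "3 * gm \<le> g0" unfolding gm_def using g0 by auto
      define eta where "eta = gm / (2 * real R + 1)"
      have eta: "0 < eta" unfolding eta_def using gm by auto
      have etaR: "2 * eta * real R \<le> gm"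
      proof -
        have "2 * eta * real R = gm * (2 * real R / (2 * real R + 1))" unfolding eta_def by (simp add: field_simps)
        also have "\<dots> \<le> gm * 1" using gm by (intro mult_left_mono) auto
        finally show ?thesis by simp
      qed
      define J where "J = nat \<lceil>(2 * real K + 2) / gm\<rceil> + 1"
      define yg where "yg j = - real K - 1 + real j * gm" for j :: nat
      have ev1: "eventually (\<lambda>n. prob {\<omega>\<in>space M. eta < dl n \<omega>} < \<zeta>/6) sequentially"
      proof -
        have "(\<lambda>n. prob {\<omega>\<in>space M. eta < dl n \<omega>}) \<longlonglongrightarrow> 0"
          unfolding dl_def c_def by (rule delta_conv[OF P est_meas consistent eta])
        then show ?thesis using ze by (intro order_tendstoD(2)) auto
      qed
      have ev2: "eventually (\<lambda>n. \<forall>j\<in>{..Suc J}. prob {\<omega>\<in>space M. \<epsilon>/8 < \<bar>G (Suc (n - d)) (yg j) \<omega> - F (yg j)\<bar>}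
          < \<zeta> / (6 * real (Suc (Suc J)))) sequentially"
      proof (rule eventually_ball_finite, simp, intro ballI)
        fix j
        have "(\<lambda>N. prob {\<omega>\<in>space M. \<epsilon>/8 < \<bar>G N (yg j) \<omega> - F (yg j)\<bar>}) \<longlonglongrightarrow> 0"
          unfolding G_def F_def using wlln_ind[OF atom, of "\<epsilon>/8" "yg j"] ep by simp
        then have "(\<lambda>n. prob {\<omega>\<in>space M. \<epsilon>/8 < \<bar>G (Suc (n - d)) (yg j) \<omega> - F (yg j)\<bar>}) \<longlonglongrightarrow> 0"
          by (rule filterlim_compose[OF _ filterlim_Suc_minus])
        then show "eventually (\<lambda>n. prob {\<omega>\<in>space M. \<epsilon>/8 < \<bar>G (Suc (n - d)) (yg j) \<omega> - F (yg j)\<bar>}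
          < \<zeta> / (6 * real (Suc (Suc J)))) sequentially"
          using ze by (intro order_tendstoD(2)) auto
      qed
      from eventually_conj[OF ev1 ev2] obtain n0 where n0: "\<And>n. n \<ge> n0 \<Longrightarrow>
          prob {\<omega>\<in>space M. eta < dl n \<omega>} < \<zeta>/6 \<and>
          (\<forall>j\<in>{..Suc J}. prob {\<omega>\<in>space M. \<epsilon>/8 < \<bar>G (Suc (n - d)) (yg j) \<omega> - F (yg j)\<bar>}
          < \<zeta> / (6 * real (Suc (Suc J))))"
        by (auto simp: eventually_sequentially)
      show "\<exists>no. \<forall>n\<ge>no. norm (prob {\<omega>\<in>space M. \<epsilon> < \<bar>U_hat d h phihat Y t n \<omega> - U_star M d h phi Y t \<omega>\<bar>} - 0) < \<zeta>"
      proof (intro exI allI impI)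
        fix n assume "n \<ge> n0"
        note nn = n0[OF this]
        define N where "N = Suc (n - d)"
        define B1 where "B1 = {\<omega>\<in>space M. eta < dl n \<omega>}"
        define B2 where "B2 = {\<omega>\<in>space M. real R < Ab 0 \<omega>}"
        define B3 where "B3 = {\<omega>\<in>space M. real K < \<bar>V0 \<omega>\<bar>}"
        define B4 where "B4 = {\<omega>\<in>space M. \<epsilon>/4 \<le> H N (real R) \<omega>}"
        define B5 where "B5 j = {\<omega>\<in>space M. \<epsilon>/8 < \<bar>G N (yg j) \<omega> - F (yg j)\<bar>}" for j
        have B5s: "B5 j \<in> sets M" for j unfolding B5_def by measurable
        have incl: "{\<omega>\<in>space M. \<epsilon> < \<bar>U_hat d h phihat Y t n \<omega> - U_star M d h phi Y t \<omega>\<bar>}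
            \<subseteq> B1 \<union> B2 \<union> B3 \<union> B4 \<union> (\<Union>j\<in>{..Suc J}. B5 j)"
        proof
          fix \<omega> assume "\<omega> \<in> {\<omega>\<in>space M. \<epsilon> < \<bar>U_hat d h phihat Y t n \<omega> - U_star M d h phi Y t \<omega>\<bar>}"
          then have om: "\<omega> \<in> space M" and big: "\<epsilon> < \<bar>Uh n \<omega> - F (V0 \<omega>)\<bar>" by (auto simp: Uhat_eq Ustar_eq)
          show "\<omega> \<in> B1 \<union> B2 \<union> B3 \<union> B4 \<union> (\<Union>j\<in>{..Suc J}. B5 j)"
          proof (rule ccontr)
            assume "\<not> ?thesis"
            then have h1: "dl n \<omega> \<le> eta" and h2: "Ab 0 \<omega> \<le> real R" and h3: "\<bar>V0 \<omega>\<bar> \<le> real K"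
              and h4: "H N (real R) \<omega> < \<epsilon>/4"
              and h5: "\<And>j. j \<le> Suc J \<Longrightarrow> \<bar>G N (yg j) \<omega> - F (yg j)\<bar> \<le> \<epsilon>/8"
              using om by (auto simp: B1_def B2_def B3_def B4_def B5_def not_less)
            define ch where "ch = pred_coef d (phihat n \<omega>) h"
            have dk: "\<bar>lin_pred d ch Y (t - int k) \<omega> - lin_pred d c Y (t - int k) \<omega>\<bar> \<le> dl n \<omega> * Ab k \<omega>" for k
              using lin_pred_diff[of d ch Y "t - int k" \<omega> c] by (simp add: dl_def Ab_def ch_def)
            have d0: "\<bar>lin_pred d ch Y t \<omega> - V0 \<omega>\<bar> \<le> dl n \<omega> * Ab 0 \<omega>"
              using dk[of 0] by (simp add: V0_def)
            have dl0: "0 \<le> dl n \<omega>" by (simp add: dl_def sum_nonneg)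
            have Ab0: "0 \<le> Ab k \<omega>" for k by (simp add: Ab_def sum_nonneg)
            have up_k: "(if lin_pred d ch Y (t - int k) \<omega> \<le> lin_pred d ch Y t \<omega> then 1 else 0)
                \<le> (if lin_pred d c Y (t - int k) \<omega> \<le> V0 \<omega> + 2*eta*real R then 1 else 0) + (if real R < Ab k \<omega> then 1 else (0::real))" for k
              by (rule sandwich_k(2)[OF dk d0 dl0 h1 h2 Ab0 Ab0])
            have lo_k: "(if lin_pred d c Y (t - int k) \<omega> \<le> V0 \<omega> - 2*eta*real R then 1 else 0) - (if real R < Ab k \<omega> then 1 else 0)
                \<le> (if lin_pred d ch Y (t - int k) \<omega> \<le> lin_pred d ch Y t \<omega> then 1 else (0::real))" for k
              by (rule sandwich_k(1)[OF dk d0 dl0 h1 h2 Ab0 Ab0])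
            have Npos: "real N > 0" by (simp add: N_def)
            have Uh_eq: "Uh n \<omega> = (\<Sum>k<N. if lin_pred d ch Y (t - int k) \<omega> \<le> lin_pred d ch Y t \<omega> then 1 else 0) / real N"
              by (simp add: Uh_def N_def ch_def)
            have Uup: "Uh n \<omega> \<le> G N (V0 \<omega> + 2*eta*real R) \<omega> + H N (real R) \<omega>"
            proof -
              have "Uh n \<omega> \<le> (\<Sum>k<N. (if lin_pred d c Y (t - int k) \<omega> \<le> V0 \<omega> + 2*eta*real R then 1 else 0)
                  + (if real R < Ab k \<omega> then 1 else (0::real))) / real N"
                unfolding Uh_eq using Npos by (intro divide_right_mono sum_mono up_k) auto
              also have "\<dots> = G N (V0 \<omega> + 2*eta*real R) \<omega> + H N (real R) \<omega>"
                by (simp add: G_def H_def sum.distrib add_divide_distrib)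
              finally show ?thesis .
            qed
            have Ulo: "G N (V0 \<omega> - 2*eta*real R) \<omega> - H N (real R) \<omega> \<le> Uh n \<omega>"
            proof -
              have "G N (V0 \<omega> - 2*eta*real R) \<omega> - H N (real R) \<omega> =
                  (\<Sum>k<N. (if lin_pred d c Y (t - int k) \<omega> \<le> V0 \<omega> - 2*eta*real R then 1 else 0)
                  - (if real R < Ab k \<omega> then 1 else (0::real))) / real N"
                by (simp add: G_def H_def sum_subtractf diff_divide_distrib)
              also have "\<dots> \<le> Uh n \<omega>"
                unfolding Uh_eq using Npos by (intro divide_right_mono sum_mono lo_k) auto
              finally show ?thesis .
            qed
            have eR0: "0 \<le> 2*eta*real R" using eta by auto
            have ygS: "yg (Suc j) = yg j + gm" for j by (simp add: yg_def algebra_simps)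
            have yg0: "- real K - 1 \<le> yg j" for j using gm by (simp add: yg_def)
            have Fup: "Uh n \<omega> < F (V0 \<omega>) + \<epsilon>/2"
            proof -
              have uin: "- real K - 1 \<le> V0 \<omega> + 2*eta*real R" "V0 \<omega> + 2*eta*real R \<le> real K + 1"
                using h3 etaR gm eR0 by (auto simp: abs_le_iff)
              obtain j where j: "j \<le> J" "yg j \<le> V0 \<omega> + 2*eta*real R" "V0 \<omega> + 2*eta*real R < yg j + gm"
                using grid_exists[OF gm(1) uin] unfolding J_def yg_def by auto
              have "G N (V0 \<omega> + 2*eta*real R) \<omega> \<le> G N (yg (Suc j)) \<omega>"
                by (rule Gmono) (use j in \<open>simp add: ygS\<close>)
              also have "\<dots> \<le> F (yg (Suc j)) + \<epsilon>/8"
              proof -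
                have hh: "\<bar>G N (yg (Suc j)) \<omega> - F (yg (Suc j))\<bar> \<le> \<epsilon>/8" using h5 j by simp
                from abs_le_D1[OF hh] show ?thesis by linarith
              qed
              also have "F (yg (Suc j)) < F (V0 \<omega>) + \<epsilon>/8"
              proof -
                have "V0 \<omega> \<in> S" "yg (Suc j) \<in> S"
                  using yg0[of "Suc j"] j ygS[of j] h3 etaR gm by (auto simp: S_def abs_le_iff)
                moreover have "dist (yg (Suc j)) (V0 \<omega>) < g0"
                  using j ygS[of j] etaR gm eR0 by (auto simp: dist_real_def abs_less_iff)
                ultimately have "dist (F (yg (Suc j))) (F (V0 \<omega>)) < \<epsilon>/8" by (rule uc)
                then show ?thesis by (simp only: dist_real_def abs_less_iff) linarith
              qed
              finally have "G N (V0 \<omega> + 2*eta*real R) \<omega> < F (V0 \<omega>) + \<epsilon>/4" by simp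
              with Uup h4 show ?thesis by linarith
            qed
            have Flo: "F (V0 \<omega>) - \<epsilon>/2 < Uh n \<omega>"
            proof -
              have lin: "- real K - 1 \<le> V0 \<omega> - 2*eta*real R" "V0 \<omega> - 2*eta*real R \<le> real K + 1"
                using h3 etaR gm eR0 by (auto simp: abs_le_iff)
              obtain j where j: "j \<le> J" "yg j \<le> V0 \<omega> - 2*eta*real R" "V0 \<omega> - 2*eta*real R < yg j + gm"
                using grid_exists[OF gm(1) lin] unfolding J_def yg_def by auto
              have "F (V0 \<omega>) - \<epsilon>/8 < F (yg j)"
              proof -
                have "V0 \<omega> \<in> S" "yg j \<in> S"
                  using yg0[of j] j h3 etaR gm eR0 by (auto simp: S_def abs_le_iff)
                moreover have "dist (yg j) (V0 \<omega>) < g0"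
                  using j etaR gm eR0 by (auto simp: dist_real_def abs_less_iff)
                ultimately have "dist (F (yg j)) (F (V0 \<omega>)) < \<epsilon>/8" by (rule uc)
                then show ?thesis by (simp only: dist_real_def abs_less_iff) linarith
              qed
              also have "F (yg j) \<le> G N (yg j) \<omega> + \<epsilon>/8"
              proof -
                have hh: "\<bar>G N (yg j) \<omega> - F (yg j)\<bar> \<le> \<epsilon>/8" using h5 j by simp
                from abs_le_D2[OF hh] show ?thesis by linarith
              qed
              also have "G N (yg j) \<omega> \<le> G N (V0 \<omega> - 2*eta*real R) \<omega>"
                by (rule Gmono) (use j in simp)
              finally have "F (V0 \<omega>) - \<epsilon>/4 < G N (V0 \<omega> - 2*eta*real R) \<omega>" by simp
              with Ulo h4 show ?thesis by linarith
            qed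
            from Fup Flo big ep show False by (simp add: abs_less_iff)
          qed
        qed
        have m4: "prob B4 < \<zeta>/6"
        proof -
          have Npos: "real N > 0" by (simp add: N_def)
          have ind_eq: "expectation (\<lambda>\<omega>. if real R < Ab k \<omega> then 1 else 0::real) = prob {\<omega>\<in>space M. real R < Ab k \<omega>}" for k
          proof -
            have "expectation (\<lambda>\<omega>. if real R < Ab k \<omega> then 1 else 0::real) = expectation (indicator {\<omega>\<in>space M. real R < Ab k \<omega>})"
              by (rule Bochner_Integration.integral_cong) (auto simp: indicator_def)
            then show ?thesis by (simp add: Int_absorb2 Collect_restrict)
          qed
          have intk: "integrable M (\<lambda>\<omega>. if real R < Ab k \<omega> then 1 else 0::real)" for k
            by (rule integrable_bdd[where B=1]) auto
          have EH: "expectation (H N (real R)) = prob {\<omega>\<in>space M. real R < Ab 0 \<omega>}"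
          proof -
            have "expectation (H N (real R)) = (\<Sum>k<N. expectation (\<lambda>\<omega>. if real R < Ab k \<omega> then 1 else 0::real)) / real N"
              unfolding H_def using intk by (simp add: Bochner_Integration.integral_sum)
            also have "\<dots> = (\<Sum>k<N. prob {\<omega>\<in>space M. real R < Ab 0 \<omega>}) / real N"
            proof -
              have "expectation (\<lambda>\<omega>. if real R < Ab k \<omega> then 1 else 0::real) = prob {\<omega>\<in>space M. real R < Ab 0 \<omega>}" for k
                using ind_eq[of k] Rk[of k] by simp
              then show ?thesis by simp
            qed
            also have "\<dots> = prob {\<omega>\<in>space M. real R < Ab 0 \<omega>}" using Npos by simp
            finally show ?thesis .
          qed
          have "prob B4 \<le> expectation (H N (real R)) / (\<epsilon>/4)"
            unfolding B4_def
          proof (rule integral_Markov_inequality_measure[where A="space M"])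
            show "integrable M (H N (real R))"
              unfolding H_def using intk by auto
            show "AE x in M. 0 \<le> H N (real R) x" by (auto simp: H_def intro!: sum_nonneg divide_nonneg_nonneg)
          qed (use ep in auto)
          also have "\<dots> = 4 * prob {\<omega>\<in>space M. real R < Ab 0 \<omega>} / \<epsilon>" using EH by simp
          also have "\<dots> < \<zeta>/6"
          proof -
            have "prob {\<omega>\<in>space M. real R < Ab 0 \<omega>} < \<zeta>*\<epsilon>/24" using R by simp
            then show ?thesis using ep by (simp add: field_simps)
          qed
          finally show ?thesis .
        qed
        have "prob {\<omega>\<in>space M. \<epsilon> < \<bar>U_hat d h phihat Y t n \<omega> - U_star M d h phi Y t \<omega>\<bar>}
            \<le> prob (B1 \<union> B2 \<union> B3 \<union> B4 \<union> (\<Union>j\<in>{..Suc J}. B5 j))"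
          by (rule finite_measure_mono[OF incl]) (use B5s in \<open>unfold B1_def B2_def B3_def B4_def, auto\<close>)
        also have "\<dots> \<le> prob B1 + prob B2 + prob B3 + prob B4 + (\<Sum>j\<in>{..Suc J}. prob (B5 j))"
        proof -
          have s1: "B1 \<in> sets M" "B2 \<in> sets M" "B3 \<in> sets M" "B4 \<in> sets M"
            unfolding B1_def B2_def B3_def B4_def by measurable
          have s5: "(\<Union>j\<in>{..Suc J}. B5 j) \<in> sets M" using B5s by auto
          have "prob (\<Union>j\<in>{..Suc J}. B5 j) \<le> (\<Sum>j\<in>{..Suc J}. prob (B5 j))"
            by (rule measure_UNION_le) (use B5s in auto)
          moreover have "prob (B1 \<union> B2 \<union> B3 \<union> B4 \<union> (\<Union>j\<in>{..Suc J}. B5 j)) \<le>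
              prob (B1 \<union> B2 \<union> B3 \<union> B4) + prob (\<Union>j\<in>{..Suc J}. B5 j)"
            using s1 s5 by (intro measure_Un_le) auto
          moreover have "prob (B1 \<union> B2 \<union> B3 \<union> B4) \<le> prob (B1 \<union> B2 \<union> B3) + prob B4"
            using s1 by (intro measure_Un_le) auto
          moreover have "prob (B1 \<union> B2 \<union> B3) \<le> prob (B1 \<union> B2) + prob B3"
            using s1 by (intro measure_Un_le) auto
          moreover have "prob (B1 \<union> B2) \<le> prob B1 + prob B2"
            using s1 by (intro measure_Un_le) auto
          ultimately show ?thesis by linarith
        qed
        also have "\<dots> < \<zeta>"
        proof -
          have "(\<Sum>j\<in>{..Suc J}. prob (B5 j)) \<le> (\<Sum>j\<in>{..Suc J}. \<zeta> / (6 * real (Suc (Suc J))))"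
          proof (intro sum_mono)
            fix j assume j: "j \<in> {..Suc J}"
            show "prob (B5 j) \<le> \<zeta> / (6 * real (Suc (Suc J)))"
              unfolding B5_def N_def by (rule less_imp_le, rule bspec[OF conjunct2[OF nn] j])
          qed
          also have "\<dots> = \<zeta>/6" by (simp add: field_simps)
          finally have "(\<Sum>j\<in>{..Suc J}. prob (B5 j)) \<le> \<zeta>/6" .
          moreover have "prob B1 < \<zeta>/6" using nn unfolding B1_def by auto
          moreover have "prob B2 < \<zeta>/6" using R unfolding B2_def by auto
          moreover have "prob B3 < \<zeta>/6" using K unfolding B3_def by auto
          ultimately show ?thesis using m4 ze by linarith
        qed
        finally show "norm (prob {\<omega>\<in>space M. \<epsilon> < \<bar>U_hat d h phihat Y t n \<omega> - U_star M d h phi Y t \<omega>\<bar>} - 0) < \<zeta>"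
          by simp
      qed
    qed
  qed
qed

end
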